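(* For $4-2\sqrt3<p\leq1$, the set $\mathcal{S}(p)$ is empty; that is, there is no $3\times3$ matrix $A=(A_{ij})_{i,j\in[3]}$ with nonnegative entries satisfying all of: (1) $A_{11}+A_{22}+p\leq\sum_{i,j}A_{ij}\leq1$; (2) $A_{1j}\geq\frac12\sum_iA_{ij}$ for all $j\in[3]$, and $A_{i1}\geq\frac12\sum_jA_{ij}$ for all $i\in[3]$; (3) $(A_{1j})^2+(A_{2j})^2\geq p\left(\sum_iA_{ij}\right)^2$ for all $j\in[3]$; (4) $(A_{i1})^2+(A_{i2})^2\geq p\left(\sum_jA_{ij}\right)^2$ for all $i\in[3]$.
   Context: $\mathcal{S}(p)$ denotes the collection of $3\times3$ nonnegative matrices satisfying conditions (1)–(4). *)

theory Defs
  imports "HOL-Analysis.Analysis"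
begin

text \<open>3x3 real matrices are real^3^3; A $ i $ j is the entry in row i, column j.
  Index 1 of the paper is (1::3), index 2 is (2::3), index 3 is (3::3) (= 0 in the type 3).\<close>

definition S_set :: "real \<Rightarrow> (real^3^3) set" where
  "S_set p = {A.
     (\<forall>i j. A $ i $ j \<ge> 0) \<and>
     A $ 1 $ 1 + A $ 2 $ 2 + p \<le> (\<Sum>i\<in>UNIV. \<Sum>j\<in>UNIV. A $ i $ j) \<and>
     (\<Sum>i\<in>UNIV. \<Sum>j\<in>UNIV. A $ i $ j) \<le> 1 \<and>
     (\<forall>j. A $ 1 $ j \<ge> (1/2) * (\<Sum>i\<in>UNIV. A $ i $ j)) \<and>
     (\<forall>i. A $ i $ 1 \<ge> (1/2) * (\<Sum>j\<in>UNIV. A $ i $ j)) \<and>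
     (\<forall>j. (A $ 1 $ j)^2 + (A $ 2 $ j)^2 \<ge> p * (\<Sum>i\<in>UNIV. A $ i $ j)^2) \<and>
     (\<forall>i. (A $ i $ 1)^2 + (A $ i $ 2)^2 \<ge> p * (\<Sum>j\<in>UNIV. A $ i $ j)^2)}"

end

theory Submission
  imports Defs
begin

lemma line_bound:
  fixes a b c p r :: real
  assumes r: "r = sqrt 3" and p: "4 - 2*r \<le> p"
    and nn: "a \<ge> 0" "b \<ge> 0" "c \<ge> 0" and dom: "b + c \<le> a"
    and q: "a^2 + b^2 \<ge> p * (a+b+c)^2"
  shows "3*b + (3+r)*c \<le> r*a"
proof (rule ccontr)
  assume H: "\<not> ?thesis"
  have r2: "r*r = 3" using r by simp
  have r0: "r \<ge> 0" using r by simp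
  have r3: "\<And>x. r*(r*x) = 3*x" using r2 by (metis mult.assoc mult.commute)
  have rpos: "r > 1.7" "r < 7/4"
  proof -
    show "r > 1.7" unfolding r by (rule real_less_rsqrt) (simp add: power2_eq_square)
    have "sqrt 3 < sqrt ((7/4)^2)" by (subst real_sqrt_less_iff) (simp add: power2_eq_square)
    thus "r < 7/4" unfolding r by simp
  qed
  have q0: "a^2 + b^2 \<ge> (4-2*r) * (a+b+c)^2"
    using q mult_right_mono[OF p zero_le_power2[of "a+b+c"]] by linarith
  show False
  proof (cases "3*b \<le> r*a")
    case True
    define c0 where "c0 = (r*a - 3*b)/(3+r)"
    have c0: "3*b + (3+r)*c0 = r*a" unfolding c0_def using rpos by (simp add: field_simps)
    have c0pos: "c0 \<ge> 0" unfolding c0_def using True rpos by simp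
    have lt: "c0 < c"
    proof (rule ccontr)
      assume "\<not> c0 < c"
      hence "(3+r)*c \<le> (3+r)*c0" using rpos by (intro mult_left_mono) auto
      thus False using H c0 by linarith
    qed
    have m1: "(4-2*r) * (a+b+c0)^2 < (4-2*r) * (a+b+c)^2"
      using lt c0pos nn rpos by (intro mult_strict_left_mono power_strict_mono) auto
    have e: "a+b+c0 = ((3+2*r)*a + r*b)/(3+r)" unfolding c0_def using rpos
      by (simp add: field_simps)
    have rb: "r*b \<le> a"
    proof -
      have "r*(3*b) \<le> r*(r*a)" using True r0 by (rule mult_left_mono)
      thus ?thesis using r2 by (simp add: algebra_simps)
    qed
    have D: "(4-2*r)*((3+2*r)*a + r*b)^2 - (3+r)^2*(a^2+b^2) = 12*b*(a - r*b)"
    proof -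
      have "(4-2*r)*((3+2*r)*a + r*b)^2 - (3+r)^2*(a^2+b^2)
         = (4*9 + 4*12*r + 16*(r*r) - 18*r - 24*(r*r) - 8*r*(r*r) - 9 - 6*r - r*r)*a^2
           + (8*(3+2*r)*r - 4*(3+2*r)*(r*r))*a*b + ((4-2*r)*(r*r) - 9 - 6*r - r*r)*b^2"
        by (simp add: power2_eq_square algebra_simps)
      also have "\<dots> = 12*b*(a - r*b)" by (simp add: algebra_simps power2_eq_square r2 r3)
      finally show ?thesis .
    qed
    have "(3+r)^2*(a^2+b^2) \<le> (4-2*r)*((3+2*r)*a + r*b)^2"
    proof -
      have "12*b*(a - r*b) \<ge> 0" using rb nn by simp
      thus ?thesis using D by linarith
    qed
    hence m2: "a^2 + b^2 \<le> (4-2*r) * (a+b+c0)^2" unfolding e using rpos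
      by (simp add: field_simps power_divide)
    show False using m1 m2 q0 by linarith
  next
    case False
    have ba: "b*r > a"
    proof -
      have "r*(r*a) < r*(3*b)" using False rpos by (intro mult_strict_left_mono) auto
      thus ?thesis using r2 by (simp add: algebra_simps)
    qed
    have F: "(4-2*r) * (a+b)^2 - (a^2 + b^2) = (2*r-3)*(b*r-a)*(r*a-b)/r"
    proof -
      have A: "(4-2*r) * (a+b)^2 - (a^2 + b^2) = ((3-2*r)*a^2 + (8-4*r)*a*b + (3-2*r)*b^2)"
        by (simp add: power2_eq_square algebra_simps)
      have B: "(2*r-3)*(b*r-a)*(r*a-b) = r*((3-2*r)*a^2 + (8-4*r)*a*b + (3-2*r)*b^2)"
      proof -
        have "(2*r-3)*(b*r-a)*(r*a-b) = (2*r-3)*((r*r)*a*b - b*b*r - r*a*a + a*b)"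
          by (simp add: algebra_simps)
        also have "\<dots> = r*((3-2*r)*a^2 + (8-4*r)*a*b + (3-2*r)*b^2)"
          by (simp add: algebra_simps power2_eq_square r2 r3)
        finally show ?thesis .
      qed
      have "r \<noteq> 0" using rpos by simp
      thus ?thesis unfolding A B by simp
    qed
    have "b \<noteq> 0" using ba nn by auto
    hence "b > 0" using nn by linarith
    hence "a > 0" using dom nn by linarith
    hence "1*a < r*a" using rpos by (intro mult_strict_right_mono) auto
    hence "b < r*a" using dom nn by linarith
    have "0 < (2*r-3)*(b*r-a)*(r*a-b)/r"
      using rpos ba \<open>b < r*a\<close> by (intro divide_pos_pos mult_pos_pos) auto
    hence "a^2 + b^2 < (4-2*r) * (a+b)^2" using F by linarith
    moreover have "(4-2*r) * (a+b)^2 \<le> (4-2*r) * (a+b+c)^2"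
      using nn rpos by (intro mult_left_mono power_mono) auto
    ultimately show False using q0 by linarith
  qed
qed

theorem lemma24:
  fixes p :: real
  assumes "4 - 2 * sqrt 3 < p" and "p \<le> 1"
  shows "S_set p = {}"
proof (rule ccontr)
  assume "S_set p \<noteq> {}"
  then obtain A where "A \<in> S_set p" by blast
  define r where "r = sqrt (3::real)"
  have r2: "r*r = 3" unfolding r_def by simp
  have r0: "r \<ge> 0" unfolding r_def by simp
  have rpos: "r > 1.7" "r < 7/4"
  proof -
    show "r > 1.7" unfolding r_def by (rule real_less_rsqrt) (simp add: power2_eq_square)
    have "sqrt 3 < sqrt ((7/4)^2)" by (subst real_sqrt_less_iff) (simp add: power2_eq_square)
    thus "r < 7/4" unfolding r_def by simp
  qed
  have pr: "4 - 2*r < p" using assms(1) unfolding r_def .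
  have pr': "4 - 2*r \<le> p" using pr by linarith
  define a11 where "a11 = A$1$1"
  define a12 where "a12 = A$1$2"
  define a13 where "a13 = A$1$3"
  define a21 where "a21 = A$2$1"
  define a22 where "a22 = A$2$2"
  define a23 where "a23 = A$2$3"
  define a31 where "a31 = A$3$1"
  define a32 where "a32 = A$3$2"
  define a33 where "a33 = A$3$3"
  note defs = a11_def a12_def a13_def a21_def a22_def a23_def a31_def a32_def a33_def
  have nn: "a11 \<ge> 0" "a12 \<ge> 0" "a13 \<ge> 0" "a21 \<ge> 0" "a22 \<ge> 0" "a23 \<ge> 0"
    "a31 \<ge> 0" "a32 \<ge> 0" "a33 \<ge> 0"
    using \<open>A \<in> S_set p\<close> unfolding S_set_def defs by auto
  have S: "(\<forall>i j. A $ i $ j \<ge> 0) \<and>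
     A $ 1 $ 1 + A $ 2 $ 2 + p \<le> (\<Sum>i\<in>UNIV. \<Sum>j\<in>UNIV. A $ i $ j) \<and>
     (\<Sum>i\<in>UNIV. \<Sum>j\<in>UNIV. A $ i $ j) \<le> 1 \<and>
     (\<forall>j. A $ 1 $ j \<ge> (1/2) * (\<Sum>i\<in>UNIV. A $ i $ j)) \<and>
     (\<forall>i. A $ i $ 1 \<ge> (1/2) * (\<Sum>j\<in>UNIV. A $ i $ j)) \<and>
     (\<forall>j. (A $ 1 $ j)^2 + (A $ 2 $ j)^2 \<ge> p * (\<Sum>i\<in>UNIV. A $ i $ j)^2) \<and>
     (\<forall>i. (A $ i $ 1)^2 + (A $ i $ 2)^2 \<ge> p * (\<Sum>j\<in>UNIV. A $ i $ j)^2)"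
    using \<open>A \<in> S_set p\<close> unfolding S_set_def by blast
  define T where "T = a11+a12+a13+a21+a22+a23+a31+a32+a33"
  have T1: "a11 + a22 + p \<le> T" "T \<le> 1"
    using S unfolding T_def defs sum_3 by (simp_all add: algebra_simps)
  have cr: "\<And>j. A $ 1 $ j \<ge> (1/2) * (\<Sum>i\<in>UNIV. A $ i $ j)"
    "\<And>i. A $ i $ 1 \<ge> (1/2) * (\<Sum>j\<in>UNIV. A $ i $ j)"
    "\<And>j. (A $ 1 $ j)^2 + (A $ 2 $ j)^2 \<ge> p * (\<Sum>i\<in>UNIV. A $ i $ j)^2"
    "\<And>i. (A $ i $ 1)^2 + (A $ i $ 2)^2 \<ge> p * (\<Sum>j\<in>UNIV. A $ i $ j)^2"
    using S by blast+
  have row1: "a12 + a13 \<le> a11" "a11^2 + a12^2 \<ge> p*(a11+a12+a13)^2"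
    using cr(2)[of 1] cr(4)[of 1] unfolding defs sum_3 by simp_all
  have col1: "a21 + a31 \<le> a11" "a11^2 + a21^2 \<ge> p*(a11+a21+a31)^2"
    using cr(1)[of 1] cr(3)[of 1] unfolding defs sum_3 by simp_all
  have col3: "a23 + a33 \<le> a13" "a13^2 + a23^2 \<ge> p*(a13+a23+a33)^2"
    using cr(1)[of 3] cr(3)[of 3] unfolding defs sum_3 by simp_all
  have row3: "a32 + a33 \<le> a31" "a31^2 + a32^2 \<ge> p*(a31+a32+a33)^2"
    using cr(2)[of 3] cr(4)[of 3] unfolding defs sum_3 by simp_all
  have b1: "3*a12 + (3+r)*a13 \<le> r*a11"
    by (rule line_bound[OF r_def pr']) (use nn row1 in auto)
  have b2: "3*a21 + (3+r)*a31 \<le> r*a11"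
    by (rule line_bound[OF r_def pr']) (use nn col1 in auto)
  have b3: "3*a23 + (3+r)*a33 \<le> r*a13"
    by (rule line_bound[OF r_def pr']) (use nn col3 in auto)
  have b4: "3*a32 + (3+r)*a33 \<le> r*a31"
    by (rule line_bound[OF r_def pr']) (use nn row3 in auto)
  define M where "M = T - a11 - a22"
  have ra33: "r*a33 \<ge> 0" using r0 nn by simp
  have M1: "3*M \<le> 2*r*a11"
    using b1 b2 b3 b4 ra33 nn unfolding M_def T_def by (simp add: algebra_simps)
  have Mp: "M \<ge> p" using T1 unfolding M_def by linarith
  have p0: "p > 0" using pr rpos by linarith
  have "p*T \<le> p" using T1 p0 by (simp add: mult_le_cancel_left1)
  hence M2: "M \<ge> p*(a11 + M)"
  proof -
    have "p*a22 \<ge> 0" using p0 nn by simp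
    thus ?thesis using Mp \<open>p*T \<le> p\<close> unfolding M_def by (simp add: algebra_simps)
  qed
  have "(1-p)*(3*M) \<le> (1-p)*(2*r*a11)"
    using M1 assms(2) by (intro mult_left_mono) auto
  moreover have "(1-p)*M \<ge> p*a11" using M2 by (simp add: algebra_simps)
  ultimately have "3*p*a11 \<le> 2*r*(1-p)*a11" by (simp add: algebra_simps)
  hence K: "a11*(3*p + 2*r*p - 2*r) \<le> 0" by (simp add: algebra_simps)
  have "(3+2*r)*(4-2*r) < (3+2*r)*p" using pr rpos by (intro mult_strict_left_mono) auto
  moreover have "(3+2*r)*(4-2*r) = 12 + 2*r - 4*(r*r)" by (simp add: algebra_simps)
  ultimately have "3*p + 2*r*p - 2*r > 0" using r2 by (simp add: algebra_simps)
  hence "a11 \<le> 0" using K by (simp add: mult_le_0_iff)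
  hence "r*a11 \<le> 0" using r0 by (simp add: mult_nonneg_nonpos)
  thus False using M1 Mp p0 by linarith
qed

end
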